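(* Let $M$ be a finite set of alternatives, $\mathcal{R}$ the set of all weak preference orders on $M$, and $\varphi:\mathcal{R}\to\Delta(M)$ a deterministic mechanism, i.e., for every $R\in\mathcal{R}$ the lottery $\varphi(R)$ puts probability $1$ on a single alternative. Then $\varphi$ is strategyproof if and only if it is separation monotonic.
   Context: A preference order is a complete, transitive binary relation $R$ on $M$; $a\,I\,b$ means $a\,R\,b$ and $b\,R\,a$, $a\,P\,b$ means $a\,R\,b$ but not $b\,R\,a$. Every preference order is written $M_1\,P\,\cdots\,P\,M_K$ with $(M_k)$ the partition of $M$ into nonempty indifference classes, ordered so that $a\,P\,b$ whenever $a\in M_k$, $b\in M_{k'}$, $k<k'$. A mechanism is a map $\varphi:\mathcal{R}\to\Delta(M)$; for $A\subseteq M$, $\varphi_A(R)=\sum_{a\in A}(\varphi(R))_a$. A lottery $x$ first order-stochastically dominates $y$ at $R$ if $\sum_{j:\, j R a}x_j\ge\sum_{j:\, j R a}y_j$ for every $a\in M$. $\varphi$ is strategyproof if for all $R,R'\in\mathcal{R}$, $\varphi(R)$ first order-stochastically dominates $\varphi(R')$ at $R$. A separation is a pair $(R,R')$ such that, with $R=M_1\,P\,\cdots\,P\,M_K$, there are $\kappa\in\{1,\dots,K\}$ and a partition of $M_\kappa$ into disjoint nonempty $M_\kappa^1,M_\kappa^2$ with $R'=M_1\,P'\,\cdots\,P'\,M_{\kappa-1}\,P'\,M_\kappa^1\,P'\,M_\kappa^2\,P'\,M_{\kappa+1}\,P'\,\cdots\,P'\,M_K$ (indifference within each listed set). $\varphi$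 is separation monotonic if for every separation $(R,R')$: (responsiveness) $\varphi_{M_\kappa^1}(R')\ge\varphi_{M_\kappa^1}(R)$ and $\varphi_{M_\kappa^2}(R')\le\varphi_{M_\kappa^2}(R)$; and (directness) if $\varphi_{M_k}(R)\ne\varphi_{M_k}(R')$ for some $k\in\{1,\dots,K\}$, then $\varphi_{M_\kappa^1}(R')\ne\varphi_{M_\kappa^1}(R)$ and $\varphi_{M_\kappa^2}(R')\ne\varphi_{M_\kappa^2}(R)$. *)

theory Defs
  imports Complex_Main
begin

(* Preferences are binary relations on the alternative set M, given as predicates;
   only their restriction to M matters. *)

definition pref_order :: "'a set \<Rightarrow> ('a \<Rightarrow> 'a \<Rightarrow> bool) \<Rightarrow> bool" where
  "pref_order M R \<longleftrightarrow>
     (\<forall>a\<in>M. \<forall>b\<in>M. R a b \<or> R b a) \<and>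
     (\<forall>a\<in>M. \<forall>b\<in>M. \<forall>c\<in>M. R a b \<longrightarrow> R b c \<longrightarrow> R a c)"

(* the set of all preference orders: relations that are complete and transitive on M
   and (to identify each order with a single object) false outside M *)
definition prefs :: "'a set \<Rightarrow> ('a \<Rightarrow> 'a \<Rightarrow> bool) set" where
  "prefs M = {R. pref_order M R \<and> (\<forall>a b. R a b \<longrightarrow> a \<in> M \<and> b \<in> M)}"

definition lottery :: "'a set \<Rightarrow> ('a \<Rightarrow> real) \<Rightarrow> bool" where
  "lottery M x \<longleftrightarrow> (\<forall>a\<in>M. x a \<ge> 0) \<and> (\<forall>a. a \<notin> M \<longrightarrow> x a = 0) \<and> (\<Sum>a\<in>M. x a) = 1"

definition mechanism :: "'a set \<Rightarrow> (('a \<Rightarrow> 'a \<Rightarrow> bool) \<Rightarrow> 'a \<Rightarrow> real) \<Rightarrow> bool" where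
  "mechanism M \<phi> \<longleftrightarrow> (\<forall>R\<in>prefs M. lottery M (\<phi> R))"

definition deterministic :: "'a set \<Rightarrow> (('a \<Rightarrow> 'a \<Rightarrow> bool) \<Rightarrow> 'a \<Rightarrow> real) \<Rightarrow> bool" where
  "deterministic M \<phi> \<longleftrightarrow> (\<forall>R\<in>prefs M. \<exists>a\<in>M. \<phi> R a = 1)"

definition prob_set :: "('a \<Rightarrow> real) \<Rightarrow> 'a set \<Rightarrow> real" where
  "prob_set x A = (\<Sum>a\<in>A. x a)"

definition sd_dominates :: "'a set \<Rightarrow> ('a \<Rightarrow> 'a \<Rightarrow> bool) \<Rightarrow> ('a \<Rightarrow> real) \<Rightarrow> ('a \<Rightarrow> real) \<Rightarrow> bool" where
  "sd_dominates M R x y \<longleftrightarrow>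
     (\<forall>a\<in>M. prob_set x {j\<in>M. R j a} \<ge> prob_set y {j\<in>M. R j a})"

definition strategyproof :: "'a set \<Rightarrow> (('a \<Rightarrow> 'a \<Rightarrow> bool) \<Rightarrow> 'a \<Rightarrow> real) \<Rightarrow> bool" where
  "strategyproof M \<phi> \<longleftrightarrow> (\<forall>R\<in>prefs M. \<forall>R'\<in>prefs M. sd_dominates M R (\<phi> R) (\<phi> R'))"

definition indiff_classes :: "'a set \<Rightarrow> ('a \<Rightarrow> 'a \<Rightarrow> bool) \<Rightarrow> 'a set set" where
  "indiff_classes M R = {{b\<in>M. R a b \<and> R b a} | a. a \<in> M}"

(* (R, R') is a separation splitting the indifference class C = M_kappa of R into
   C1 = M_kappa^1 (now strictly preferred) and C2 = M_kappa^2; all other comparisons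
   are unchanged. *)
definition separation_at ::
  "'a set \<Rightarrow> ('a \<Rightarrow> 'a \<Rightarrow> bool) \<Rightarrow> ('a \<Rightarrow> 'a \<Rightarrow> bool) \<Rightarrow> 'a set \<Rightarrow> 'a set \<Rightarrow> 'a set \<Rightarrow> bool" where
  "separation_at M R R' C C1 C2 \<longleftrightarrow>
     R \<in> prefs M \<and> R' \<in> prefs M \<and>
     C \<in> indiff_classes M R \<and> C1 \<noteq> {} \<and> C2 \<noteq> {} \<and> C1 \<inter> C2 = {} \<and> C1 \<union> C2 = C \<and>
     (\<forall>a\<in>M. \<forall>b\<in>M. R' a b \<longleftrightarrow>
        (if a \<in> C \<and> b \<in> C then a \<in> C1 \<or> b \<in> C2 else R a b))"

definition separation_monotonic :: "'a set \<Rightarrow> (('a \<Rightarrow> 'a \<Rightarrow> bool) \<Rightarrow> 'a \<Rightarrow> real) \<Rightarrow> bool" where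
  "separation_monotonic M \<phi> \<longleftrightarrow>
     (\<forall>R R' C C1 C2. separation_at M R R' C C1 C2 \<longrightarrow>
        (prob_set (\<phi> R') C1 \<ge> prob_set (\<phi> R) C1 \<and>
         prob_set (\<phi> R') C2 \<le> prob_set (\<phi> R) C2) \<and>
        ((\<exists>D\<in>indiff_classes M R. prob_set (\<phi> R) D \<noteq> prob_set (\<phi> R') D) \<longrightarrow>
           prob_set (\<phi> R') C1 \<noteq> prob_set (\<phi> R) C1 \<and>
           prob_set (\<phi> R') C2 \<noteq> prob_set (\<phi> R) C2))"

end

theory Submission
  imports Defs
begin

definition sel :: "'a set \<Rightarrow> (('a \<Rightarrow> 'a \<Rightarrow> bool) \<Rightarrow> 'a \<Rightarrow> real) \<Rightarrow> ('a \<Rightarrow> 'a \<Rightarrow> bool) \<Rightarrow> 'a" where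
  "sel M \<phi> R = (SOME a. a \<in> M \<and> \<phi> R a = 1)"

definition refine_at :: "('a \<Rightarrow> 'a \<Rightarrow> bool) \<Rightarrow> 'a \<Rightarrow> 'a set \<Rightarrow> ('a \<Rightarrow> 'a \<Rightarrow> bool)" where
  "refine_at K x C1 = (\<lambda>z w. K z w \<and> (K x z \<and> K z x \<and> K x w \<and> K w x \<longrightarrow> z \<in> C1 \<or> w \<notin> C1))"

lemma prefsD:
  assumes "R \<in> prefs M"
  shows "R a b \<Longrightarrow> a \<in> M" "R a b \<Longrightarrow> b \<in> M"
    "a \<in> M \<Longrightarrow> b \<in> M \<Longrightarrow> R a b \<or> R b a"
    "R a b \<Longrightarrow> R b c \<Longrightarrow> R a c"
proof -
  have A: "pref_order M R \<and> (\<forall>a b. R a b \<longrightarrow> a \<in> M \<and> b \<in> M)"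
    using assms unfolding prefs_def by (rule CollectD)
  then have po: "pref_order M R" by (rule conjunct1)
  have out: "R a b \<Longrightarrow> a \<in> M \<and> b \<in> M" for a b
    using A by (meson)
  have B: "(\<forall>a\<in>M. \<forall>b\<in>M. R a b \<or> R b a) \<and>
     (\<forall>a\<in>M. \<forall>b\<in>M. \<forall>c\<in>M. R a b \<longrightarrow> R b c \<longrightarrow> R a c)"
    using po unfolding pref_order_def .
  show "R a b \<Longrightarrow> a \<in> M" using out by (meson)
  show "R a b \<Longrightarrow> b \<in> M" using out by (meson)
  show "a \<in> M \<Longrightarrow> b \<in> M \<Longrightarrow> R a b \<or> R b a" using B by (meson)
  show "R a b \<Longrightarrow> R b c \<Longrightarrow> R a c"
  proof -
    assume ab: "R a b" and bc: "R b c"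
    have "a \<in> M" "b \<in> M" "c \<in> M" using out[OF ab] out[OF bc] by (meson)+
    then show "R a c" using B ab bc by (meson)
  qed
qed

lemma prefs_refl: "R \<in> prefs M \<Longrightarrow> a \<in> M \<Longrightarrow> R a a"
  using prefsD(3)[of R M a a] by blast

lemma prefsI:
  assumes "\<And>a b. R a b \<Longrightarrow> a \<in> M \<and> b \<in> M"
    "\<And>a b. a \<in> M \<Longrightarrow> b \<in> M \<Longrightarrow> R a b \<or> R b a"
    "\<And>a b c. a \<in> M \<Longrightarrow> b \<in> M \<Longrightarrow> c \<in> M \<Longrightarrow> R a b \<Longrightarrow> R b c \<Longrightarrow> R a c"
  shows "R \<in> prefs M"
  using assms unfolding prefs_def pref_order_def by blast

lemma refine_prefs:
  assumes K: "K \<in> prefs M"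
  shows "refine_at K x C1 \<in> prefs M"
proof (rule prefsI)
  fix a b assume "refine_at K x C1 a b" then show "a \<in> M \<and> b \<in> M"
    unfolding refine_at_def using prefsD(1,2)[OF K] by blast
next
  fix a b assume "a \<in> M" "b \<in> M"
  then show "refine_at K x C1 a b \<or> refine_at K x C1 b a"
  proof (cases "K x a \<and> K a x \<and> K x b \<and> K b x")
    case True
    then have "K a b" "K b a" using prefsD(4)[OF K] by blast+
    then show ?thesis unfolding refine_at_def by blast
  next
    case False
    then show ?thesis unfolding refine_at_def using prefsD(3)[OF K \<open>a \<in> M\<close> \<open>b \<in> M\<close>] by blast
  qed
next
  fix a b c assume "a \<in> M" "b \<in> M" "c \<in> M" "refine_at K x C1 a b" "refine_at K x C1 b c"
  then have ab: "K a b" and bc: "K b c"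
    and h1: "K x a \<and> K a x \<and> K x b \<and> K b x \<longrightarrow> a \<in> C1 \<or> b \<notin> C1"
    and h2: "K x b \<and> K b x \<and> K x c \<and> K c x \<longrightarrow> b \<in> C1 \<or> c \<notin> C1"
    unfolding refine_at_def by blast+
  have ac: "K a c" using prefsD(4)[OF K ab bc] .
  have "a \<in> C1 \<or> c \<notin> C1" if "K x a" "K a x" "K x c" "K c x"
  proof -
    have "K x b" using prefsD(4)[OF K \<open>K x a\<close> ab] .
    moreover have "K b x" using prefsD(4)[OF K bc \<open>K c x\<close>] .
    ultimately show ?thesis using h1 h2 that by blast
  qed
  then show "refine_at K x C1 a c" unfolding refine_at_def using ac by blast
qed

lemma refine_sub: "refine_at K x C1 a b \<Longrightarrow> K a b"
  unfolding refine_at_def by blast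

lemma refine_triv:
  assumes "C1 = {} \<or> {z. K x z \<and> K z x} \<subseteq> C1"
  shows "refine_at K x C1 = K"
  using assms unfolding refine_at_def by (auto intro!: ext)

lemma refine_sep:
  assumes K: "K \<in> prefs M" and x: "x \<in> M"
    and C: "C = {z\<in>M. K x z \<and> K z x}" and C1: "C1 \<subseteq> C" "C1 \<noteq> {}" "C - C1 \<noteq> {}"
  shows "separation_at M K (refine_at K x C1) C C1 (C - C1)"
  unfolding separation_at_def
proof (intro conjI)
  show "refine_at K x C1 \<in> prefs M" by (rule refine_prefs[OF K])
  show "C \<in> indiff_classes M K" unfolding indiff_classes_def C using x by blast
  show "\<forall>a\<in>M. \<forall>b\<in>M. refine_at K x C1 a b =
      (if a \<in> C \<and> b \<in> C then a \<in> C1 \<or> b \<in> C - C1 else K a b)"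
  proof (intro ballI)
    fix a b assume "a \<in> M" "b \<in> M"
    show "refine_at K x C1 a b = (if a \<in> C \<and> b \<in> C then a \<in> C1 \<or> b \<in> C - C1 else K a b)"
    proof (cases "a \<in> C \<and> b \<in> C")
      case True
      then have "K a x" "K x b" "K x a" "K a x" "K x b" "K b x" unfolding C by blast+
      then have "K a b" using prefsD(4)[OF K] by blast
      then show ?thesis using True \<open>K x a\<close> \<open>K a x\<close> \<open>K x b\<close> \<open>K b x\<close>
        unfolding refine_at_def by auto
    next
      case False
      then have "\<not> (K x a \<and> K a x \<and> K x b \<and> K b x)" using \<open>a \<in> M\<close> \<open>b \<in> M\<close> unfolding C by blast
      then show ?thesis using False unfolding refine_at_def by auto
    qed
  qed
  show "C1 \<noteq> {}" "C - C1 \<noteq> {}" "K \<in> prefs M" by fact+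
  show "C1 \<inter> (C - C1) = {}" by blast
  show "C1 \<union> (C - C1) = C" using C1(1) by blast
qed

context
  fixes M :: "'a set" and \<phi> :: "('a \<Rightarrow> 'a \<Rightarrow> bool) \<Rightarrow> 'a \<Rightarrow> real"
  assumes fin: "finite M" and mech: "mechanism M \<phi>" and det: "deterministic M \<phi>"
begin

lemma sel_props:
  assumes R: "R \<in> prefs M"
  shows "sel M \<phi> R \<in> M \<and> \<phi> R (sel M \<phi> R) = 1"
proof -
  obtain a where "a \<in> M \<and> \<phi> R a = 1" using det R unfolding deterministic_def by blast
  then show ?thesis unfolding sel_def by (rule someI)
qed

lemma phi_eq:
  assumes R: "R \<in> prefs M"
  shows "\<phi> R z = (if z = sel M \<phi> R then 1 else 0)"
proof -
  define a where "a = sel M \<phi> R"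
  have aM: "a \<in> M" and a1: "\<phi> R a = 1" using sel_props[OF R] unfolding a_def by blast+
  have lot: "lottery M (\<phi> R)" using mech R unfolding mechanism_def by blast
  then have nn: "\<forall>b\<in>M. \<phi> R b \<ge> 0" and out: "\<forall>b. b \<notin> M \<longrightarrow> \<phi> R b = 0"
    and s1: "(\<Sum>b\<in>M. \<phi> R b) = 1" unfolding lottery_def by blast+
  have "(\<Sum>b\<in>M. \<phi> R b) = \<phi> R a + (\<Sum>b\<in>M - {a}. \<phi> R b)"
    using fin aM by (simp add: sum.remove)
  then have "(\<Sum>b\<in>M - {a}. \<phi> R b) = 0" using s1 a1 by simp
  then have "\<forall>b\<in>M - {a}. \<phi> R b = 0"
    using sum_nonneg_eq_0_iff[of "M - {a}" "\<phi> R"] fin nn by simp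
  then show ?thesis using out a1 unfolding a_def[symmetric] by (cases "z = a") auto
qed

lemma prob_eq:
  assumes R: "R \<in> prefs M" and A: "A \<subseteq> M"
  shows "prob_set (\<phi> R) A = (if sel M \<phi> R \<in> A then 1 else 0)"
proof -
  have "finite A" using fin A finite_subset by blast
  then show ?thesis unfolding prob_set_def phi_eq[OF R] by (simp add: sum.delta')
qed

lemma step:
  assumes SM: "separation_monotonic M \<phi>" and sep: "separation_at M K F C C1 C2"
  shows "K (sel M \<phi> K) (sel M \<phi> F) \<and> K (sel M \<phi> F) (sel M \<phi> K) \<and>
    (sel M \<phi> K \<in> C1 \<longrightarrow> sel M \<phi> F \<in> C1)"
proof -
  define s where "s = sel M \<phi> K"
  define t where "t = sel M \<phi> F"
  have K: "K \<in> prefs M" and F: "F \<in> prefs M" and Ccl: "C \<in> indiff_classes M K"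
    and C1C: "C1 \<union> C2 = C" and disj: "C1 \<inter> C2 = {}"
    using sep unfolding separation_at_def by blast+
  obtain c where cM: "c \<in> M" and Cdef: "C = {b\<in>M. K c b \<and> K b c}"
    using Ccl unfolding indiff_classes_def by blast
  have CM: "C1 \<subseteq> M" "C2 \<subseteq> M" using C1C Cdef by blast+
  have sM: "s \<in> M" and tM: "t \<in> M" using sel_props[OF K] sel_props[OF F] unfolding s_def t_def by blast+
  have resp: "prob_set (\<phi> F) C1 \<ge> prob_set (\<phi> K) C1" "prob_set (\<phi> F) C2 \<le> prob_set (\<phi> K) C2"
    and dir: "(\<exists>D\<in>indiff_classes M K. prob_set (\<phi> K) D \<noteq> prob_set (\<phi> F) D) \<longrightarrow>
           prob_set (\<phi> F) C1 \<noteq> prob_set (\<phi> K) C1 \<and> prob_set (\<phi> F) C2 \<noteq> prob_set (\<phi> K) C2"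
    using SM sep unfolding separation_monotonic_def by blast+
  note pK = prob_eq[OF K, folded s_def] and pF = prob_eq[OF F, folded t_def]
  have r1: "s \<in> C1 \<longrightarrow> t \<in> C1" using resp(1) pK[OF CM(1)] pF[OF CM(1)]
    by (auto split: if_splits)
  have same: "K s t \<and> K t s"
  proof (rule ccontr)
    assume nst: "\<not> (K s t \<and> K t s)"
    define D where "D = {b\<in>M. K s b \<and> K b s}"
    have DM: "D \<subseteq> M" unfolding D_def by blast
    have Dcl: "D \<in> indiff_classes M K" unfolding D_def indiff_classes_def using sM by blast
    have sD: "s \<in> D" unfolding D_def using sM prefs_refl[OF K sM] by blast
    have tD: "t \<notin> D" unfolding D_def using nst by blast
    have "prob_set (\<phi> K) D \<noteq> prob_set (\<phi> F) D" using pK[OF DM] pF[OF DM] sD tD by simp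
    then have d: "prob_set (\<phi> F) C1 \<noteq> prob_set (\<phi> K) C1 \<and> prob_set (\<phi> F) C2 \<noteq> prob_set (\<phi> K) C2"
      using dir Dcl by blast
    have "t \<in> C1" "s \<in> C2"
      using d resp pK[OF CM(1)] pF[OF CM(1)] pK[OF CM(2)] pF[OF CM(2)]
      by (auto split: if_splits)
    then have "t \<in> C" "s \<in> C" using C1C by blast+
    then have "K c t" "K t c" "K c s" "K s c" unfolding Cdef by blast+
    then have "K s t" "K t s" using prefsD(4)[OF K] by blast+
    then show False using nst by blast
  qed
  show ?thesis using same r1 unfolding s_def t_def by blast
qed

lemma step':
  assumes SM: "separation_monotonic M \<phi>" and K: "K \<in> prefs M" and x: "x \<in> M"
    and C1: "C1 \<subseteq> {z\<in>M. K x z \<and> K z x}"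
  shows "K (sel M \<phi> K) (sel M \<phi> (refine_at K x C1)) \<and> K (sel M \<phi> (refine_at K x C1)) (sel M \<phi> K) \<and>
    (sel M \<phi> K \<in> C1 \<longrightarrow> sel M \<phi> (refine_at K x C1) \<in> C1)"
proof (cases "C1 = {} \<or> {z. K x z \<and> K z x} \<subseteq> C1")
  case True
  then have e: "refine_at K x C1 = K" by (rule refine_triv)
  have "sel M \<phi> K \<in> M" using sel_props[OF K] by blast
  then have "K (sel M \<phi> K) (sel M \<phi> K)" by (rule prefs_refl[OF K])
  then show ?thesis unfolding e by blast
next
  case False
  define C where "C = {z\<in>M. K x z \<and> K z x}"
  have "C - C1 \<noteq> {}" using False C1 prefsD(1,2)[OF K] unfolding C_def by blast
  moreover have "C1 \<noteq> {}" using False by blast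
  ultimately have "separation_at M K (refine_at K x C1) C C1 (C - C1)"
    using refine_sep[OF K x C_def] C1 unfolding C_def by blast
  then show ?thesis by (rule step[OF SM])
qed

lemma GK:
  assumes SM: "separation_monotonic M \<phi>" and F: "F \<in> prefs M"
  shows "K \<in> prefs M \<Longrightarrow> (\<forall>z w. F z w \<longrightarrow> K z w) \<Longrightarrow>
    K (sel M \<phi> K) (sel M \<phi> F) \<and> K (sel M \<phi> F) (sel M \<phi> K)"
proof (induction "card {p\<in>M\<times>M. K (fst p) (snd p) \<and> \<not> F (fst p) (snd p)}" arbitrary: K rule: less_induct)
  case (less K)
  have K: "K \<in> prefs M" and sub: "\<forall>z w. F z w \<longrightarrow> K z w" using less.prems by blast+
  define Dk where "Dk = {p\<in>M\<times>M. K (fst p) (snd p) \<and> \<not> F (fst p) (snd p)}"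
  show ?case
  proof (cases "Dk = {}")
    case True
    have "K = F"
    proof (intro ext iffI)
      fix z w assume "K z w"
      moreover have "z \<in> M" "w \<in> M" using prefsD(1,2)[OF K \<open>K z w\<close>] .
      ultimately show "F z w" using True unfolding Dk_def by auto
    next
      fix z w assume "F z w" then show "K z w" using sub by blast
    qed
    moreover have "sel M \<phi> F \<in> M" using sel_props[OF F] by blast
    ultimately show ?thesis using prefs_refl[OF F] by simp
  next
    case False
    then obtain x y where xM: "x \<in> M" and yM: "y \<in> M" and Kxy: "K x y" and nFxy: "\<not> F x y"
      unfolding Dk_def by auto
    have Fyx: "F y x" using prefsD(3)[OF F xM yM] nFxy by blast
    have Kyx: "K y x" using sub Fyx by blast
    have Kxx: "K x x" using prefs_refl[OF K xM] .
    have Fyy: "F y y" using prefs_refl[OF F yM] .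
    define C1 where "C1 = {z\<in>M. K x z \<and> K z x \<and> F z y}"
    define K' where "K' = refine_at K x C1"
    have K': "K' \<in> prefs M" unfolding K'_def by (rule refine_prefs[OF K])
    have C1sub: "C1 \<subseteq> {z\<in>M. K x z \<and> K z x}" unfolding C1_def by blast
    have sub': "\<forall>z w. F z w \<longrightarrow> K' z w"
    proof (intro allI impI)
      fix z w assume Fzw: "F z w"
      have zM: "z \<in> M" using prefsD(1)[OF F Fzw] .
      have "K x z \<and> K z x \<and> K x w \<and> K w x \<longrightarrow> z \<in> C1 \<or> w \<notin> C1"
      proof (intro impI)
        assume h: "K x z \<and> K z x \<and> K x w \<and> K w x"
        show "z \<in> C1 \<or> w \<notin> C1"
        proof (cases "w \<in> C1")
          case True
          then have "F w y" unfolding C1_def by blast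
          then have "F z y" using prefsD(4)[OF F Fzw] by blast
          then show ?thesis using h zM unfolding C1_def by blast
        qed blast
      qed
      then show "K' z w" unfolding K'_def refine_at_def using sub Fzw by blast
    qed
    define Dk' where "Dk' = {p\<in>M\<times>M. K' (fst p) (snd p) \<and> \<not> F (fst p) (snd p)}"
    have nK'xy: "\<not> K' x y"
    proof -
      have "x \<notin> C1" unfolding C1_def using nFxy by blast
      moreover have "y \<in> C1" unfolding C1_def using yM Kxy Kyx Fyy by blast
      ultimately show ?thesis unfolding K'_def refine_at_def using Kxx Kxy Kyx by blast
    qed
    have "Dk' \<subseteq> Dk - {(x, y)}"
      unfolding Dk'_def Dk_def using nK'xy refine_sub[of K x C1] unfolding K'_def by auto
    moreover have "(x, y) \<in> Dk" unfolding Dk_def using xM yM Kxy nFxy by auto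
    moreover have "finite Dk" unfolding Dk_def using fin by (auto intro: finite_subset)
    ultimately have "Dk' \<subset> Dk" "finite Dk" by blast+
    then have "card Dk' < card Dk" by (simp add: psubset_card_mono)
    then have c: "card {p\<in>M\<times>M. K' (fst p) (snd p) \<and> \<not> F (fst p) (snd p)}
        < card {p\<in>M\<times>M. K (fst p) (snd p) \<and> \<not> F (fst p) (snd p)}"
      unfolding Dk'_def Dk_def .
    have IH: "K' (sel M \<phi> K') (sel M \<phi> F) \<and> K' (sel M \<phi> F) (sel M \<phi> K')"
      by (rule less.hyps[OF c K' sub'])
    have st: "K (sel M \<phi> K) (sel M \<phi> K') \<and> K (sel M \<phi> K') (sel M \<phi> K)"
      using step'[OF SM K xM C1sub] unfolding K'_def by blast
    have "K (sel M \<phi> K') (sel M \<phi> F)" "K (sel M \<phi> F) (sel M \<phi> K')"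
      using IH refine_sub[of K x C1] unfolding K'_def by blast+
    then show ?thesis using st prefsD(4)[OF K] by blast
  qed
qed

lemma SM_SP:
  assumes SM: "separation_monotonic M \<phi>" and R: "R \<in> prefs M" and R2: "R2 \<in> prefs M"
  shows "R (sel M \<phi> R) (sel M \<phi> R2)"
proof -
  define b where "b = sel M \<phi> R2"
  define a where "a = sel M \<phi> R"
  have bM: "b \<in> M" unfolding b_def using sel_props[OF R2] by blast
  have aM: "a \<in> M" unfolding a_def using sel_props[OF R] by blast
  define R1 where "R1 = refine_at R2 b {b}"
  have R1: "R1 \<in> prefs M" unfolding R1_def by (rule refine_prefs[OF R2])
  have R1tr: "\<And>x y z. R1 x y \<Longrightarrow> R1 y z \<Longrightarrow> R1 x z" using prefsD(4)[OF R1] by blast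
  have R1b: "R1 b b" using prefs_refl[OF R1 bM] .
  have "{b} \<subseteq> {z\<in>M. R2 b z \<and> R2 z b}" using bM prefs_refl[OF R2 bM] by blast
  from step'[OF SM R2 bM this] have "sel M \<phi> R1 = b" unfolding R1_def b_def by blast
  have R1prop: "z = b" if "R1 z b" "R1 b z" for z
    using that unfolding R1_def refine_at_def using prefs_refl[OF R2 bM] by blast
  define V where "V = (\<lambda>z w. z \<in> M \<and> w \<in> M \<and> (R1 z b \<or> \<not> R1 w b))"
  have V: "V \<in> prefs M"
  proof (rule prefsI)
    fix x y z assume "V x y" "V y z" then show "V x z" unfolding V_def using R1tr by blast
  qed (auto simp: V_def)
  have R1V: "\<forall>z w. R1 z w \<longrightarrow> V z w"
    unfolding V_def using prefsD(1,2)[OF R1] R1tr by blast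
  define v where "v = sel M \<phi> V"
  have vM: "v \<in> M" unfolding v_def using sel_props[OF V] by blast
  have "V v b" using GK[OF SM R1 V R1V] \<open>sel M \<phi> R1 = b\<close> unfolding v_def by blast
  then have R1vb: "R1 v b" unfolding V_def using R1b by blast
  define A' where "A' = {z\<in>M. R1 z b \<and> \<not> R1 b z}"
  have Vb: "V b z \<longleftrightarrow> z \<in> M" for z unfolding V_def using bM R1b by blast
  have VbR: "V z b \<longleftrightarrow> z \<in> M \<and> R1 z b" for z unfolding V_def using bM R1b by blast
  have A'sub: "A' \<subseteq> {z\<in>M. V b z \<and> V z b}" unfolding A'_def using Vb VbR by blast
  define W where "W = refine_at V b A'"
  have W: "W \<in> prefs M" unfolding W_def by (rule refine_prefs[OF V])
  have R1W: "\<forall>z w. R1 z w \<longrightarrow> W z w"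
  proof (intro allI impI)
    fix z w assume Rzw: "R1 z w"
    have zM: "z \<in> M" using prefsD(1)[OF R1 Rzw] .
    have "z \<in> A' \<or> w \<notin> A'" if "V z b"
    proof (rule ccontr)
      assume "\<not> (z \<in> A' \<or> w \<notin> A')"
      then have wA: "w \<in> A'" and zA: "z \<notin> A'" by blast+
      have "R1 z b" using that VbR by blast
      then have "R1 b z" using zA zM unfolding A'_def by blast
      then have "R1 b w" using R1tr Rzw by blast
      then show False using wA unfolding A'_def by blast
    qed
    then show "W z w" unfolding W_def refine_at_def using R1V Rzw by blast
  qed
  define w' where "w' = sel M \<phi> W"
  have w'M: "w' \<in> M" unfolding w'_def using sel_props[OF W] by blast
  have gw: "W w' b \<and> W b w'" using GK[OF SM R1 W R1W] \<open>sel M \<phi> R1 = b\<close> unfolding w'_def by blast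
  have bA: "b \<notin> A'" unfolding A'_def using R1b by blast
  have "R1 w' b" using gw refine_sub[of V b A'] VbR unfolding W_def by blast
  moreover have "w' \<notin> A'"
    using gw bA Vb VbR w'M bM \<open>R1 w' b\<close> unfolding W_def refine_at_def by blast
  ultimately have "R1 b w'" using w'M unfolding A'_def by blast
  then have "w' = b" using R1prop \<open>R1 w' b\<close> by blast
  have "v \<notin> A'" using step'[OF SM V bM A'sub] \<open>w' = b\<close> bA unfolding w'_def W_def v_def by metis
  then have "R1 b v" using vM R1vb unfolding A'_def by blast
  then have vb: "v = b" using R1prop R1vb by blast
  define N where "N = refine_at V b {b}"
  have N: "N \<in> prefs M" unfolding N_def by (rule refine_prefs[OF V])
  have "{b} \<subseteq> {z\<in>M. V b z \<and> V z b}" using bM Vb VbR R1b by blast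
  from step'[OF SM V bM this] vb have Nb: "sel M \<phi> N = b" unfolding N_def v_def by blast
  define P where "P = (\<lambda>z w. z \<in> M \<and> w \<in> M \<and> (z = b \<or> w \<noteq> b))"
  have P: "P \<in> prefs M"
    by (rule prefsI) (auto simp: P_def)
  have NP: "\<forall>z w. N z w \<longrightarrow> P z w"
  proof (intro allI impI)
    fix z w assume Nzw: "N z w"
    have zM: "z \<in> M" and wM: "w \<in> M" using prefsD(1,2)[OF N Nzw] by blast+
    have "z = b" if "w = b"
    proof -
      have "V z b" using Nzw that refine_sub[of V b "{b}"] unfolding N_def by blast
      then show ?thesis using Nzw that Vb VbR zM bM unfolding N_def refine_at_def by blast
    qed
    then show "P z w" unfolding P_def using zM wM by blast
  qed
  have "P (sel M \<phi> P) b" using GK[OF SM N P NP] Nb by blast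
  then have Pb: "sel M \<phi> P = b" unfolding P_def by blast
  define X where "X = (\<lambda>z w. z \<in> M \<and> w \<in> M \<and> (z = b \<or> (w \<noteq> b \<and> R z w)))"
  have X: "X \<in> prefs M"
  proof (rule prefsI)
    fix x y assume "x \<in> M" "y \<in> M" then show "X x y \<or> X y x"
      unfolding X_def using prefsD(3)[OF R, of x y] by blast
  next
    fix x y z assume "X x y" "X y z" then show "X x z" unfolding X_def using prefsD(4)[OF R] by blast
  qed (auto simp: X_def)
  have XP: "\<forall>z w. X z w \<longrightarrow> P z w" unfolding X_def P_def by blast
  have "P (sel M \<phi> X) b" using GK[OF SM X P XP] Pb by blast
  then have Xb: "sel M \<phi> X = b" unfolding P_def by blast
  define Y where "Y = (\<lambda>z w. z \<in> M \<and> w \<in> M \<and> (R z b \<or> R z w))"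
  have Y: "Y \<in> prefs M"
  proof (rule prefsI)
    fix x y assume "x \<in> M" "y \<in> M" then show "Y x y \<or> Y y x"
      unfolding Y_def using prefsD(3)[OF R, of x y] by blast
  next
    fix x y z assume "Y x y" "Y y z" then show "Y x z" unfolding Y_def using prefsD(4)[OF R] by blast
  qed (auto simp: Y_def)
  have RY: "\<forall>z w. R z w \<longrightarrow> Y z w" unfolding Y_def using prefsD(1,2)[OF R] by blast
  have XY: "\<forall>z w. X z w \<longrightarrow> Y z w" unfolding X_def Y_def using prefs_refl[OF R bM] by blast
  have "Y a (sel M \<phi> Y)" using GK[OF SM R Y RY] unfolding a_def by blast
  moreover have "Y (sel M \<phi> Y) b" using GK[OF SM X Y XY] Xb by blast
  ultimately have "Y a b" using prefsD(4)[OF Y] by blast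
  then show ?thesis unfolding Y_def a_def b_def by blast
qed

lemma SP_iff:
  "strategyproof M \<phi> \<longleftrightarrow> (\<forall>R\<in>prefs M. \<forall>R'\<in>prefs M. R (sel M \<phi> R) (sel M \<phi> R'))"
proof
  assume SP: "strategyproof M \<phi>"
  show "\<forall>R\<in>prefs M. \<forall>R'\<in>prefs M. R (sel M \<phi> R) (sel M \<phi> R')"
  proof (intro ballI)
    fix R R' assume R: "R \<in> prefs M" and R': "R' \<in> prefs M"
    define t where "t = sel M \<phi> R'"
    have tM: "t \<in> M" unfolding t_def using sel_props[OF R'] by blast
    define A where "A = {j\<in>M. R j t}"
    have AM: "A \<subseteq> M" unfolding A_def by blast
    have tA: "t \<in> A" unfolding A_def using tM prefs_refl[OF R tM] by blast
    have "prob_set (\<phi> R) A \<ge> prob_set (\<phi> R') A"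
      using SP R R' tM unfolding strategyproof_def sd_dominates_def A_def by blast
    then have "sel M \<phi> R \<in> A" using prob_eq[OF R AM] prob_eq[OF R' AM] tA unfolding t_def
      by (auto split: if_splits)
    then show "R (sel M \<phi> R) (sel M \<phi> R')" unfolding A_def t_def by blast
  qed
next
  assume H: "\<forall>R\<in>prefs M. \<forall>R'\<in>prefs M. R (sel M \<phi> R) (sel M \<phi> R')"
  show "strategyproof M \<phi>" unfolding strategyproof_def sd_dominates_def
  proof (intro ballI)
    fix R R' x assume R: "R \<in> prefs M" and R': "R' \<in> prefs M" and xM: "x \<in> M"
    define A where "A = {j\<in>M. R j x}"
    have AM: "A \<subseteq> M" unfolding A_def by blast
    have "sel M \<phi> R' \<in> A \<Longrightarrow> sel M \<phi> R \<in> A"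
    proof -
      assume "sel M \<phi> R' \<in> A"
      then have "R (sel M \<phi> R') x" unfolding A_def by blast
      moreover have "R (sel M \<phi> R) (sel M \<phi> R')" using H R R' by blast
      ultimately have "R (sel M \<phi> R) x" using prefsD(4)[OF R] by blast
      then show "sel M \<phi> R \<in> A" unfolding A_def using prefsD(1)[OF R] by blast
    qed
    then show "prob_set (\<phi> R) A \<ge> prob_set (\<phi> R') A"
      using prob_eq[OF R AM] prob_eq[OF R' AM] by auto
  qed
qed

lemma SP_SM:
  assumes H: "\<forall>R\<in>prefs M. \<forall>R'\<in>prefs M. R (sel M \<phi> R) (sel M \<phi> R')"
  shows "separation_monotonic M \<phi>"
  unfolding separation_monotonic_def
proof (intro allI impI)
  fix R R' C C1 C2 assume sep: "separation_at M R R' C C1 C2"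
  have R: "R \<in> prefs M" and R': "R' \<in> prefs M" and Ccl: "C \<in> indiff_classes M R"
    and C1C: "C1 \<union> C2 = C" and disj: "C1 \<inter> C2 = {}"
    and iff: "\<forall>a\<in>M. \<forall>b\<in>M. R' a b \<longleftrightarrow> (if a \<in> C \<and> b \<in> C then a \<in> C1 \<or> b \<in> C2 else R a b)"
    using sep unfolding separation_at_def by blast+
  obtain c where cM: "c \<in> M" and Cdef: "C = {b\<in>M. R c b \<and> R b c}"
    using Ccl unfolding indiff_classes_def by blast
  have CM: "C1 \<subseteq> M" "C2 \<subseteq> M" using C1C Cdef by blast+
  define s where "s = sel M \<phi> R"
  define t where "t = sel M \<phi> R'"
  have sM: "s \<in> M" and tM: "t \<in> M" using sel_props[OF R] sel_props[OF R'] unfolding s_def t_def by blast+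
  have Rst: "R s t" using H R R' unfolding s_def t_def by blast
  have R'ts: "R' t s" using H R R' unfolding s_def t_def by blast
  have Rts: "R t s"
  proof (cases "t \<in> C \<and> s \<in> C")
    case True
    then have "R t c" "R c s" unfolding Cdef by blast+
    then show ?thesis using prefsD(4)[OF R] by blast
  next
    case False
    then show ?thesis using iff R'ts tM sM by auto
  qed
  have cls: "s \<in> D \<longleftrightarrow> t \<in> D" if Dc: "D \<in> indiff_classes M R" for D
  proof -
    obtain d where "D = {b\<in>M. R d b \<and> R b d}" using Dc unfolding indiff_classes_def by blast
    then show ?thesis using Rst Rts sM tM prefsD(4)[OF R] by blast
  qed
  have sC: "s \<in> C \<longleftrightarrow> t \<in> C" using cls Ccl by blast
  have r1: "s \<in> C1 \<Longrightarrow> t \<in> C1"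
  proof -
    assume sC1: "s \<in> C1"
    then have "t \<in> C" "s \<in> C" using sC C1C by blast+
    then have "t \<in> C1 \<or> s \<in> C2" using iff R'ts tM sM by auto
    then show "t \<in> C1" using sC1 disj by blast
  qed
  have r2: "t \<in> C2 \<Longrightarrow> s \<in> C2"
  proof -
    assume tC2: "t \<in> C2"
    then have "s \<in> C" using sC C1C by blast
    moreover have "s \<notin> C1" using r1 tC2 disj by blast
    ultimately show "s \<in> C2" using C1C by blast
  qed
  have pe: "prob_set (\<phi> R) D = prob_set (\<phi> R') D" if Dc: "D \<in> indiff_classes M R" for D
  proof -
    have "D \<subseteq> M" using Dc unfolding indiff_classes_def by blast
    then show ?thesis using prob_eq[OF R] prob_eq[OF R'] cls[OF Dc] unfolding s_def t_def by simp
  qed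
  show "(prob_set (\<phi> R) C1 \<le> prob_set (\<phi> R') C1 \<and> prob_set (\<phi> R') C2 \<le> prob_set (\<phi> R) C2) \<and>
       ((\<exists>D\<in>indiff_classes M R. prob_set (\<phi> R) D \<noteq> prob_set (\<phi> R') D) \<longrightarrow>
        prob_set (\<phi> R') C1 \<noteq> prob_set (\<phi> R) C1 \<and> prob_set (\<phi> R') C2 \<noteq> prob_set (\<phi> R) C2)"
    using pe r1 r2 prob_eq[OF R CM(1)] prob_eq[OF R' CM(1)] prob_eq[OF R CM(2)] prob_eq[OF R' CM(2)]
    unfolding s_def t_def by auto
qed

end

theorem corollary1:
  fixes M :: "'a set" and \<phi> :: "('a \<Rightarrow> 'a \<Rightarrow> bool) \<Rightarrow> 'a \<Rightarrow> real"
  assumes "finite M"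
    and "mechanism M \<phi>"
    and "deterministic M \<phi>"
  shows "strategyproof M \<phi> \<longleftrightarrow> separation_monotonic M \<phi>"
proof
  assume "strategyproof M \<phi>"
  then show "separation_monotonic M \<phi>"
    using SP_iff[OF assms] SP_SM[OF assms] by blast
next
  assume SM: "separation_monotonic M \<phi>"
  show "strategyproof M \<phi>"
    unfolding SP_iff[OF assms] using SM_SP[OF assms SM] by blast
qed

end
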